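(* In the single-node deterministic selection process described in the context, for every $\tau\ge1$, $$\big|V^*(i)-\mathbb{E}[V_\tau(i)]\big|\le\frac{c_4}{\tau^{c_5}},\qquad c_4=(b-1)\Big(\Big(\frac{c_1}{\Delta_{\min}(i)}\Big)^{1/c_2}+1\Big),\quad c_5=1-\frac{c_3}{c_2}.$$
   Context: Fix constants $c_1>0$ and $0<c_3<c_2$. A node $i$ has a finite set $C(i)$ of $b\ge2$ children; each child $j$ has a deterministic value $Q^*(j)\in[0,1]$, and there is a unique maximizer $j^*=\arg\max_{j\in C(i)}Q^*(j)$. Set $V^*(i)=Q^*(j^* )$, $\Delta(j)=Q^*(j^* )-Q^*(j)$ and $\Delta_{\min}(i)=\min_{j\neq j^*}\Delta(j)>0$. The node is visited at times $s=1,2,\dots$; at visit $s$ one child $\mu(s)$ is selected and yields value $Q^*(\mu(s))$. Let $T(i,s)=s-1$ be the number of previous visits to $i$ and $T(j,s)$ the number of previous selections of $j$ (before visit $s$). Selection rule: if some child has $T(j,s)=0$, select one such child (chosen at random); otherwise select a maximizer of $Q^*(j)+c_1\,T(i,s)^{c_3}/T(j,s)^{c_2}$, ties broken at random. After $\tau$ visits, $T_\tau(j)$ denotes the number of selections of $j$ among visits $1,\dots,\tau$, and $V_\tau(i)=\frac1\tau\sum_{s=1}^{\tau}Q^*(\mu(s))$ is the average value of node $i$. *)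

theory Defs
  imports "HOL-Probability.Probability"
begin

text \<open>A run of the selection process at node i over tau visits is the list of selected
children mu(1),...,mu(tau) (0-indexed here: visit s+1 is position s).
Before visit s+1, T(i,s+1) = s and T(j,s+1) = number of occurrences of j in the first s entries.\<close>

definition prev_count :: "'a list \<Rightarrow> nat \<Rightarrow> 'a \<Rightarrow> nat" where
  "prev_count mu s j = count_list (take s mu) j"

definition ucb_score :: "real \<Rightarrow> real \<Rightarrow> real \<Rightarrow> ('a \<Rightarrow> real) \<Rightarrow> 'a list \<Rightarrow> nat \<Rightarrow> 'a \<Rightarrow> real" where
  "ucb_score c1 c2 c3 Q mu s j =
     Q j + c1 * (real s) powr c3 / (real (prev_count mu s j)) powr c2"

text \<open>Admissible run: every selection obeys the selection rule (ties / choice among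
unvisited children may be resolved arbitrarily).\<close>
definition admissible_run ::
  "real \<Rightarrow> real \<Rightarrow> real \<Rightarrow> 'a set \<Rightarrow> ('a \<Rightarrow> real) \<Rightarrow> nat \<Rightarrow> 'a list \<Rightarrow> bool" where
  "admissible_run c1 c2 c3 C Q tau mu \<longleftrightarrow>
     length mu = tau \<and>
     (\<forall>s<tau. mu ! s \<in> C \<and>
        ((\<exists>j\<in>C. prev_count mu s j = 0) \<longrightarrow> prev_count mu s (mu ! s) = 0) \<and>
        ((\<forall>j\<in>C. prev_count mu s j \<noteq> 0) \<longrightarrow>
           (\<forall>j\<in>C. ucb_score c1 c2 c3 Q mu s j \<le> ucb_score c1 c2 c3 Q mu s (mu ! s))))"

definition avg_value :: "('a \<Rightarrow> real) \<Rightarrow> nat \<Rightarrow> 'a list \<Rightarrow> real" where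
  "avg_value Q tau mu = (1 / real tau) * (\<Sum>s<tau. Q (mu ! s))"

definition Delta_min :: "'a set \<Rightarrow> ('a \<Rightarrow> real) \<Rightarrow> 'a \<Rightarrow> real" where
  "Delta_min C Q jstar = Min ((\<lambda>j. Q jstar - Q j) ` (C - {jstar}))"

end

theory Submission
  imports Defs
begin

lemma count_take_sum:
  "t \<le> length xs \<Longrightarrow> real (count_list (take t xs) x) = (\<Sum>s<t. if xs ! s = x then 1 else 0)"
proof (induction t)
  case 0 then show ?case by simp
next
  case (Suc t)
  then have "take (Suc t) xs = take t xs @ [xs ! t]" by (simp add: take_Suc_conv_app_nth)
  then show ?case using Suc by simp
qed

lemma count_bound:
  assumes adm: "admissible_run c1 c2 c3 C Q tau mu"
    and c1: "c1 > 0" and c23: "0 < c3" "c3 < c2"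
    and jstar: "jstar \<in> C"
    and jC: "j \<in> C" "j \<noteq> jstar" and D: "D > 0" "D \<le> Q jstar - Q j"
  shows "t \<le> tau \<Longrightarrow> real (count_list (take t mu) j) \<le> (c1/D) powr (1/c2) * real tau powr (c3/c2) + 1"
proof (induction t)
  case 0 then show ?case by (simp add: c1 D)
next
  case (Suc t)
  have len: "length mu = tau" using adm by (simp add: admissible_run_def)
  have tk: "take (Suc t) mu = take t mu @ [mu ! t]" using Suc len by (simp add: take_Suc_conv_app_nth)
  define n where "n = count_list (take t mu) j"
  have Kpos: "0 \<le> (c1/D) powr (1/c2) * real tau powr (c3/c2)" by simp
  show ?case
  proof (cases "mu ! t = j")
    case False then show ?thesis using tk Suc by simp
  next
    case True
    show ?thesis
    proof (cases "n = 0")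
      case True then show ?thesis using tk Kpos by (simp add: n_def)
    next
      case False
      have ts: "t < tau" using Suc by simp
      have adm_t: "mu ! t \<in> C \<and>
        ((\<exists>j\<in>C. prev_count mu t j = 0) \<longrightarrow> prev_count mu t (mu ! t) = 0) \<and>
        ((\<forall>j\<in>C. prev_count mu t j \<noteq> 0) \<longrightarrow>
           (\<forall>j\<in>C. ucb_score c1 c2 c3 Q mu t j \<le> ucb_score c1 c2 c3 Q mu t (mu ! t)))"
        using adm ts by (simp add: admissible_run_def)
      have pcj: "prev_count mu t j = n" by (simp add: prev_count_def n_def)
      have allnz: "\<forall>j\<in>C. prev_count mu t j \<noteq> 0" using adm_t True pcj False by auto
      then have sc: "ucb_score c1 c2 c3 Q mu t jstar \<le> ucb_score c1 c2 c3 Q mu t j"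
        using adm_t True jstar by auto
      define m where "m = prev_count mu t jstar"
      have "m \<noteq> 0" using allnz jstar m_def by auto
      have npos: "real n > 0" using False by simp
      have t0: "real t \<ge> 0" by simp
      have "0 \<le> c1 * real t powr c3 / real m powr c2" using c1 by simp
      then have "Q jstar \<le> Q j + c1 * real t powr c3 / real n powr c2"
        using sc by (simp add: ucb_score_def pcj m_def)
      then have "D \<le> c1 * real t powr c3 / real n powr c2" using D by simp
      then have "D * real n powr c2 \<le> c1 * real t powr c3"
        using npos by (simp add: field_simps)
      then have h1: "real n powr c2 \<le> (c1/D) * real t powr c3"
        using D by (simp add: field_simps)
      have "real n = (real n powr c2) powr (1/c2)" using c23 npos by (simp add: powr_powr)
      also have "\<dots> \<le> ((c1/D) * real t powr c3) powr (1/c2)"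
        using h1 c23 by (intro powr_mono2) auto
      also have "\<dots> = (c1/D) powr (1/c2) * real t powr (c3/c2)"
        using c1 D by (subst powr_mult) (auto simp: powr_powr)
      also have "\<dots> \<le> (c1/D) powr (1/c2) * real tau powr (c3/c2)"
        using ts c23 by (intro mult_left_mono powr_mono2) auto
      finally have "real n \<le> (c1/D) powr (1/c2) * real tau powr (c3/c2)" .
      then show ?thesis using tk True by (simp add: n_def)
    qed
  qed
qed

theorem lemma7:
  fixes c1 c2 c3 :: real and C :: "'a set" and Q :: "'a \<Rightarrow> real" and jstar :: 'a
    and tau :: nat and p :: "'a list pmf"
  assumes c1: "c1 > 0" and c23: "0 < c3" "c3 < c2"
    and finC: "finite C" and b2: "card C \<ge> 2"
    and Qrange: "\<forall>j\<in>C. 0 \<le> Q j \<and> Q j \<le> 1"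
    and jstar: "jstar \<in> C" "\<forall>j\<in>C. j \<noteq> jstar \<longrightarrow> Q j < Q jstar"
    and tau: "tau \<ge> 1"
    and runs: "\<forall>mu\<in>set_pmf p. admissible_run c1 c2 c3 C Q tau mu"
  shows "\<bar>Q jstar - measure_pmf.expectation p (avg_value Q tau)\<bar>
           \<le> (real (card C) - 1) * ((c1 / Delta_min C Q jstar) powr (1 / c2) + 1)
             / (real tau) powr (1 - c3 / c2)"
proof -
  define D where "D = Delta_min C Q jstar"
  define A where "A = (c1 / D) powr (1 / c2)"
  define e where "e = c3 / c2"
  define B where "B = (real (card C) - 1) * (A + 1) / (real tau) powr (1 - e)"
  have finCj: "finite (C - {jstar})" using finC by simp
  have ne: "C - {jstar} \<noteq> {}"
  proof
    assume "C - {jstar} = {}"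
    then have "C \<subseteq> {jstar}" by auto
    then have "card C \<le> 1" using card_mono[of "{jstar}" C] by simp
    then show False using b2 by simp
  qed
  have Dpos: "D > 0" unfolding D_def Delta_min_def
    using finCj ne jstar by (subst Min_gr_iff) auto
  have Dle: "\<And>j. j \<in> C \<Longrightarrow> j \<noteq> jstar \<Longrightarrow> D \<le> Q jstar - Q j"
    unfolding D_def Delta_min_def using finCj by (intro Min_le) auto
  have cardm: "real (card (C - {jstar})) = real (card C) - 1"
  proof -
    have "card C \<ge> 1" using jstar finC card_gt_0_iff[of C] by auto
    then show ?thesis using jstar finC by (simp add: card_Diff_singleton of_nat_diff)
  qed
  have taupos: "real tau > 0" using tau by simp
  have te: "real tau powr e \<ge> 1" using tau c23 unfolding e_def by (intro ge_one_powr_ge_zero) auto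
  have per: "0 \<le> Q jstar - avg_value Q tau mu \<and> Q jstar - avg_value Q tau mu \<le> B"
    if adm: "admissible_run c1 c2 c3 C Q tau mu" for mu
  proof -
    have len: "length mu = tau" and inC: "\<And>s. s < tau \<Longrightarrow> mu ! s \<in> C"
      using adm by (auto simp: admissible_run_def)
    have eq: "Q jstar - avg_value Q tau mu = (1 / real tau) * (\<Sum>s<tau. Q jstar - Q (mu ! s))"
      using taupos by (simp add: avg_value_def sum_subtractf field_simps)
    have nn: "0 \<le> (\<Sum>s<tau. Q jstar - Q (mu ! s))"
      using inC jstar by (intro sum_nonneg) (smt (verit) lessThan_iff)
    have "(\<Sum>s<tau. Q jstar - Q (mu ! s)) \<le> (\<Sum>s<tau. (\<Sum>j\<in>C - {jstar}. if mu ! s = j then 1 else 0))"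
    proof (rule sum_mono)
      fix s assume "s \<in> {..<tau}"
      then have sC: "mu ! s \<in> C" using inC by simp
      have "(\<Sum>j\<in>C - {jstar}. if mu ! s = j then 1 else (0::real)) = (if mu ! s = jstar then 0 else 1)"
        using sC finCj by (simp add: sum.delta)
      moreover have "Q jstar - Q (mu ! s) \<le> (if mu ! s = jstar then 0 else 1)"
        using sC Qrange jstar by (smt (verit))
      ultimately show "Q jstar - Q (mu ! s) \<le> (\<Sum>j\<in>C - {jstar}. if mu ! s = j then 1 else 0)" by simp
    qed
    also have "\<dots> = (\<Sum>j\<in>C - {jstar}. real (count_list (take tau mu) j))"
      by (subst sum.swap) (intro sum.cong refl, use count_take_sum[of tau mu] len in simp)
    also have "\<dots> \<le> real (card (C - {jstar})) * (A * real tau powr e + 1)"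
      using count_bound[OF adm c1 c23 jstar(1) _ _ Dpos Dle] unfolding A_def e_def
      by (intro sum_bounded_above) auto
    finally have "(\<Sum>s<tau. Q jstar - Q (mu ! s)) \<le> (real (card C) - 1) * (A * real tau powr e + 1)"
      using cardm by simp
    then have "Q jstar - avg_value Q tau mu \<le> (real (card C) - 1) * (A * real tau powr e + 1) / real tau"
      using eq taupos by (simp add: field_simps)
    also have "\<dots> \<le> (real (card C) - 1) * ((A + 1) * real tau powr e) / real tau"
      using te b2 taupos unfolding A_def
      by (intro divide_right_mono mult_left_mono) (auto simp: algebra_simps)
    also have "\<dots> = B"
      unfolding B_def using taupos by (simp add: powr_diff field_simps)
    finally show ?thesis using eq nn taupos by simp
  qed
  have Bnn: "0 \<le> B" using b2 unfolding B_def A_def by simp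
  have bnd: "\<forall>mu\<in>set_pmf p. norm (avg_value Q tau mu) \<le> \<bar>Q jstar\<bar> + B"
    using per runs by fastforce
  have int: "integrable (measure_pmf p) (avg_value Q tau)"
    by (rule measure_pmf.integrable_const_bound[where B="\<bar>Q jstar\<bar> + B"])
       (use bnd in \<open>auto simp: AE_measure_pmf_iff\<close>)
  have "measure_pmf.expectation p (avg_value Q tau) \<le> Q jstar"
    by (rule measure_pmf.integral_le_const[OF int]) (use per runs in \<open>auto simp: AE_measure_pmf_iff\<close>)
  moreover have "Q jstar - B \<le> measure_pmf.expectation p (avg_value Q tau)"
    by (rule measure_pmf.integral_ge_const[OF int]) (use per runs in \<open>fastforce simp: AE_measure_pmf_iff\<close>)
  ultimately show ?thesis unfolding B_def A_def e_def D_def by simp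
qed

end
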